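(* Let $i\ge 1$ be an integer and $k\ge 10i+35$. Let $H$ be a weighted graph with edge weight $\omega:E(H)\to\{3,4,5\}$ which contains no cycle of odd weight smaller than $2k+1$. Let $B_1,B_2$ be sets of vertices of $H$ with $d(B_1,B_2)\ge 2i+2$, and let $P$ be a path of minimal weight among all paths between $B_1$ and $B_2$. If $N^{3i+1}[B_1]$ and $N^{3i+1}[B_2]$ are weighted bipartite, then $N^i[B_1\cup B_2\cup P]$ is weighted bipartite.
   Context: The weight of a subgraph is the sum of the weights of its edges. $d(B_1,B_2)$ is the unweighted distance, i.e. the minimum number of edges of a path between a vertex of $B_1$ and a vertex of $B_2$. $N^j[S]$ is the set of vertices at unweighted distance at most $j$ from some vertex of $S$ (for a path, of its vertex set). A vertex set $S$ is weighted bipartite if $H[S]$ contains no cycle of odd weight. *)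

theory Defs
  imports Main "HOL-Library.Extended_Nat"
begin

definition graph :: "'a set \<Rightarrow> 'a set set \<Rightarrow> bool" where
  "graph V E \<longleftrightarrow> finite V \<and> (\<forall>e\<in>E. e \<subseteq> V \<and> card e = 2)"

definition adj :: "'a set set \<Rightarrow> 'a \<Rightarrow> 'a \<Rightarrow> bool" where
  "adj E u v \<longleftrightarrow> {u, v} \<in> E"

definition is_walk :: "'a set set \<Rightarrow> 'a list \<Rightarrow> bool" where
  "is_walk E xs \<longleftrightarrow> xs \<noteq> [] \<and> (\<forall>i. Suc i < length xs \<longrightarrow> adj E (xs ! i) (xs ! Suc i))"

definition is_path :: "'a set set \<Rightarrow> 'a list \<Rightarrow> bool" where
  "is_path E xs \<longleftrightarrow> is_walk E xs \<and> distinct xs"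

definition walk_len :: "'a list \<Rightarrow> nat" where
  "walk_len xs = length xs - 1"

definition walk_weight :: "('a set \<Rightarrow> nat) \<Rightarrow> 'a list \<Rightarrow> nat" where
  "walk_weight w xs = (\<Sum>i<length xs - 1. w {xs ! i, xs ! Suc i})"

definition is_cycle :: "'a set set \<Rightarrow> 'a list \<Rightarrow> bool" where
  "is_cycle E xs \<longleftrightarrow> length xs \<ge> 3 \<and> is_path E xs \<and> adj E (last xs) (hd xs)"

definition cycle_weight :: "('a set \<Rightarrow> nat) \<Rightarrow> 'a list \<Rightarrow> nat" where
  "cycle_weight w xs = walk_weight w (xs @ [hd xs])"

definition path_between :: "'a set set \<Rightarrow> 'a set \<Rightarrow> 'a set \<Rightarrow> 'a list \<Rightarrow> bool" where
  "path_between E B1 B2 xs \<longleftrightarrow> is_path E xs \<and> hd xs \<in> B1 \<and> last xs \<in> B2"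

text \<open>Unweighted distance between vertex sets: minimum number of edges of a path
  between a vertex of B1 and a vertex of B2 (\<infinity> if there is none).\<close>
definition set_dist :: "'a set set \<Rightarrow> 'a set \<Rightarrow> 'a set \<Rightarrow> enat" where
  "set_dist E B1 B2 = (INF xs \<in> {xs. path_between E B1 B2 xs}. enat (walk_len xs))"

definition closed_nbhd :: "'a set \<Rightarrow> 'a set set \<Rightarrow> nat \<Rightarrow> 'a set \<Rightarrow> 'a set" where
  "closed_nbhd V E j S = {v \<in> V. \<exists>u\<in>S. set_dist E {u} {v} \<le> enat j}"

definition weighted_bipartite :: "'a set set \<Rightarrow> ('a set \<Rightarrow> nat) \<Rightarrow> 'a set \<Rightarrow> bool" where
  "weighted_bipartite E w S \<longleftrightarrow>
     \<not> (\<exists>C. is_cycle E C \<and> set C \<subseteq> S \<and> odd (cycle_weight w C))"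

end

theory Submission
  imports Defs "HOL-Library.Extended_Nat"
begin


fun wk :: "'a set set \<Rightarrow> 'a list \<Rightarrow> bool" where
  "wk E [] = False"
| "wk E [x] = True"
| "wk E (x # y # zs) = (adj E x y \<and> wk E (y # zs))"

fun ww :: "('a set \<Rightarrow> nat) \<Rightarrow> 'a list \<Rightarrow> nat" where
  "ww w [] = 0"
| "ww w [x] = 0"
| "ww w (x # y # zs) = w {x, y} + ww w (y # zs)"

lemma is_walk_Cons2: "is_walk E (x # y # zs) \<longleftrightarrow> adj E x y \<and> is_walk E (y # zs)"
  unfolding is_walk_def
proof safe
  fix j assume "\<forall>j. Suc j < length (x # y # zs) \<longrightarrow> adj E ((x # y # zs) ! j) ((x # y # zs) ! Suc j)"
    and "Suc j < length (y # zs)"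
  then show "adj E ((y # zs) ! j) ((y # zs) ! Suc j)"
    by (metis Suc_less_eq length_Cons nth_Cons_Suc)
next
  fix j assume a: "adj E x y" "\<forall>j. Suc j < length (y # zs) \<longrightarrow> adj E ((y # zs) ! j) ((y # zs) ! Suc j)"
    "Suc j < length (x # y # zs)"
  show "adj E ((x # y # zs) ! j) ((x # y # zs) ! Suc j)"
  proof (cases j)
    case 0 then show ?thesis using a by simp
  next
    case (Suc m) then show ?thesis using a(2,3) by auto
  qed
qed auto

lemma is_walk_wk: "is_walk E xs \<longleftrightarrow> wk E xs"
proof (induction E xs rule: wk.induct)
  case (1 E) then show ?case by (simp add: is_walk_def)
next
  case (2 E x) then show ?case by (simp add: is_walk_def)
next
  case (3 E x y zs) then show ?case by (simp only: is_walk_Cons2 wk.simps)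
qed

lemma walk_weight_ww: "walk_weight w xs = ww w xs"
proof (induction w xs rule: ww.induct)
  case (1 w) then show ?case by (simp add: walk_weight_def)
next
  case (2 w x) then show ?case by (simp add: walk_weight_def)
next
  case (3 w x y zs)
  have "walk_weight w (x # y # zs) = (\<Sum>j<Suc (length zs). w {(x # y # zs) ! j, (x # y # zs) ! Suc j})"
    by (simp add: walk_weight_def)
  also have "\<dots> = w {x, y} + (\<Sum>j<length zs. w {(y # zs) ! j, (y # zs) ! Suc j})"
    by (subst sum.lessThan_Suc_shift) simp
  also have "\<dots> = w {x, y} + walk_weight w (y # zs)" by (simp add: walk_weight_def)
  finally show ?case using 3 by simp
qed

lemma ww_append: "ww w (xs @ y # ys) = ww w (xs @ [y]) + ww w (y # ys)"
proof (induction xs)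
  case Nil then show ?case by simp
next
  case (Cons a xs) then show ?case by (cases xs) auto
qed

lemma wk_append: "wk E (xs @ y # ys) \<longleftrightarrow> wk E (xs @ [y]) \<and> wk E (y # ys)"
proof (induction xs)
  case Nil then show ?case by simp
next
  case (Cons a xs) then show ?case by (cases xs) auto
qed

lemma glue:
  assumes "wk E xs" "wk E ys" "last xs = hd ys"
  shows "wk E (xs @ tl ys)" "ww w (xs @ tl ys) = ww w xs + ww w ys"
    "hd (xs @ tl ys) = hd xs" "last (xs @ tl ys) = last ys"
    "set (xs @ tl ys) \<subseteq> set xs \<union> set ys" "length (xs @ tl ys) = length xs + length ys - 1"
proof -
  have ne: "xs \<noteq> []" "ys \<noteq> []" using assms by auto
  obtain as where as: "xs = as @ [last xs]" using ne by (metis append_butlast_last_id)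
  obtain bs where bs: "ys = hd ys # bs" using ne by (metis list.collapse)
  have eq: "xs @ tl ys = as @ last xs # bs" using as bs
    by (metis append.assoc append_Cons append_Nil list.sel(3))
  show "wk E (xs @ tl ys)" unfolding eq using wk_append[of E as "last xs" bs] assms as bs
    by (metis)
  show "ww w (xs @ tl ys) = ww w xs + ww w ys" unfolding eq using ww_append[of w as "last xs" bs] assms as bs
    by metis
  show "hd (xs @ tl ys) = hd xs" using ne by simp
  show "last (xs @ tl ys) = last ys" using eq as bs assms
    by (metis last_ConsR last_appendR last_snoc list.distinct(1) list.sel(3) ne(2) self_append_conv2 last.simps)
  show "set (xs @ tl ys) \<subseteq> set xs \<union> set ys" using ne by (auto simp: list.set_sel(2))
  show "length (xs @ tl ys) = length xs + length ys - 1" using ne by (cases ys) auto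
qed

lemma app:
  assumes "wk E xs" "wk E ys" "adj E (last xs) (hd ys)"
  shows "wk E (xs @ ys)" "ww w (xs @ ys) = ww w xs + w {last xs, hd ys} + ww w ys"
    "hd (xs @ ys) = hd xs" "last (xs @ ys) = last ys"
proof -
  have ne: "xs \<noteq> []" "ys \<noteq> []" using assms by auto
  obtain as where as: "xs = as @ [last xs]" using ne by (metis append_butlast_last_id)
  obtain bs where bs: "ys = hd ys # bs" using ne by (metis list.collapse)
  have eq: "xs @ ys = as @ last xs # ys" using as by (metis append.assoc append_Cons append_Nil)
  have "wk E (last xs # ys)" using bs assms by (metis wk.simps(3))
  then show "wk E (xs @ ys)" unfolding eq using wk_append[of E as "last xs" ys] assms as by metis
  have "ww w (last xs # ys) = w {last xs, hd ys} + ww w ys" using bs by (metis ww.simps(3))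
  then show "ww w (xs @ ys) = ww w xs + w {last xs, hd ys} + ww w ys"
    unfolding eq using ww_append[of w as "last xs" ys] as by simp
  show "hd (xs @ ys) = hd xs" using ne by simp
  show "last (xs @ ys) = last ys" using ne by simp
qed

lemma adj_sym: "adj E x y \<Longrightarrow> adj E y x"
  by (simp add: adj_def insert_commute)

lemma wk_rev: "wk E xs \<Longrightarrow> wk E (rev xs)"
proof (induction E xs rule: wk.induct)
  case (3 E x y zs)
  have "wk E (rev (y # zs))" using 3 by simp
  moreover have "adj E (last (rev (y # zs))) (hd [x])" using 3 adj_sym by auto
  ultimately show ?case using app(1)[of E "rev (y # zs)" "[x]"] by simp
qed auto

lemma ww_rev: "wk E xs \<Longrightarrow> ww w (rev xs) = ww w xs"
proof (induction E xs rule: wk.induct)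
  case (3 E x y zs)
  have "wk E (rev (y # zs))" using 3 wk_rev[of E "y # zs"] by auto
  moreover have "adj E (last (rev (y # zs))) (hd [x])" using 3 adj_sym by auto
  ultimately have "ww w (rev (y # zs) @ [x]) = ww w (rev (y # zs)) + w {y, x}"
    using app(2)[of E "rev (y # zs)" "[x]" w] by simp
  then show ?case using 3 by (simp add: insert_commute)
qed auto

lemma wk_prefix:
  assumes "wk E xs" "v \<in> set xs"
  shows "\<exists>ys. wk E ys \<and> hd ys = hd xs \<and> last ys = v \<and> length ys \<le> length xs \<and> set ys \<subseteq> set xs"
proof -
  obtain as bs where xs: "xs = as @ v # bs" using assms(2) by (metis split_list)
  have "wk E (as @ [v])" using assms(1) xs wk_append by metis
  then show ?thesis using xs by (intro exI[of _ "as @ [v]"]) (cases as; auto)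
qed

lemma wk_path:
  assumes "wk E xs"
  shows "\<exists>ys. wk E ys \<and> distinct ys \<and> hd ys = hd xs \<and> last ys = last xs \<and> ww w ys \<le> ww w xs
     \<and> length ys \<le> length xs \<and> set ys \<subseteq> set xs"
  using assms
proof (induction "length xs" arbitrary: xs rule: less_induct)
  case less
  show ?case
  proof (cases "distinct xs")
    case True then show ?thesis using less by blast
  next
    case False
    then obtain a x b c where xs: "xs = a @ [x] @ b @ [x] @ c" using not_distinct_decomp by blast
    define zs where "zs = a @ x # c"
    have w1: "wk E (a @ [x])" "wk E (x # b @ x # c)" using less(2) xs wk_append[of E a x "b @ x # c"] by auto
    have "wk E ((x # b) @ x # c)" using w1 by simp
    then have w2: "wk E (x # c)" using wk_append by metis
    have wz: "wk E zs" unfolding zs_def using w1 w2 wk_append by metis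
    have "ww w xs = ww w (a @ [x]) + ww w ((x # b) @ x # c)" using xs ww_append[of w a x "b @ x # c"] by simp
    also have "\<dots> = ww w (a @ [x]) + ww w ((x # b) @ [x]) + ww w (x # c)" using ww_append[of w "x # b" x c] by simp
    finally have "ww w zs \<le> ww w xs" unfolding zs_def using ww_append[of w a x c] by simp
    moreover have "length zs < length xs" unfolding zs_def xs by simp
    moreover have "hd zs = hd xs" unfolding zs_def xs by (cases a) auto
    moreover have "last zs = last xs" unfolding zs_def xs by (cases c) auto
    moreover have "set zs \<subseteq> set xs" unfolding zs_def xs by auto
    ultimately show ?thesis using less(1)[of zs] wz by fastforce
  qed
qed



lemma adj_V: "graph V E \<Longrightarrow> adj E x y \<Longrightarrow> x \<in> V \<and> y \<in> V \<and> x \<noteq> y"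
proof -
  assume "graph V E" "adj E x y"
  then have "{x, y} \<subseteq> V \<and> card {x, y} = 2" unfolding graph_def adj_def by blast
  then show ?thesis by (cases "x = y") auto
qed

lemma walk_V: "graph V E \<Longrightarrow> wk E xs \<Longrightarrow> hd xs \<in> V \<Longrightarrow> set xs \<subseteq> V"
proof (induction E xs rule: wk.induct)
  case (3 E x y zs) then show ?case using adj_V[of V E x y] by auto
qed auto

lemma ww_bounds:
  assumes "\<forall>e\<in>E. w e \<in> {3,4,5::nat}" "wk E xs"
  shows "3 * (length xs - 1) \<le> ww w xs \<and> ww w xs \<le> 5 * (length xs - 1)"
  using assms(2,1)
proof (induction E xs rule: wk.induct)
  case (3 E' x y zs)
  then have "w {x, y} \<in> {3,4,5}" by (auto simp: adj_def)
  then show ?case using 3 by auto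
qed auto

lemma take_drop_split:
  assumes "s < length xs"
  shows "xs = take s xs @ xs ! s # drop (Suc s) xs" "take (Suc s) xs = take s xs @ [xs ! s]"
    "drop s xs = xs ! s # drop (Suc s) xs"
  using assms by (auto simp: id_take_nth_drop take_Suc_conv_app_nth Cons_nth_drop_Suc)

lemma ww_take_drop: "s < length xs \<Longrightarrow> ww w xs = ww w (take (Suc s) xs) + ww w (drop s xs)"
  using take_drop_split[of s xs] ww_append[of w "take s xs" "xs ! s" "drop (Suc s) xs"] by metis

lemma wk_take_drop: "s < length xs \<Longrightarrow> wk E xs \<Longrightarrow> wk E (take (Suc s) xs) \<and> wk E (drop s xs)"
  using take_drop_split[of s xs] wk_append[of E "take s xs" "xs ! s" "drop (Suc s) xs"] by metis

lemma closed_odd_cycle: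
  assumes G: "graph V E" and "wk E xs" "hd xs = last xs" "odd (ww w xs)"
  shows "\<exists>C. is_cycle E C \<and> set C \<subseteq> set xs \<and> odd (cycle_weight w C) \<and> cycle_weight w C \<le> ww w xs"
  using assms(2-)
proof (induction "length xs" arbitrary: xs rule: less_induct)
  case less
  have ne: "xs \<noteq> []" using less(2) by auto
  define bl where "bl = butlast xs"
  define h where "h = last xs"
  have xs: "xs = bl @ [h]" unfolding bl_def h_def using ne by simp
  show ?case
  proof (cases "distinct bl")
    case True
    show ?thesis
    proof (cases "length bl \<ge> 3")
      case True
      have blne: "bl \<noteq> []" using True by auto
      have "hd xs = hd bl" using xs blne by (metis hd_append2)
      then have hb: "hd bl = h" using less(3) unfolding h_def by simp
      have "wk E (bl @ [h])" using less(2) xs by simp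
      moreover have "bl @ [h] = butlast bl @ last bl # [h]" using blne by simp
      ultimately have "wk E (butlast bl @ [last bl]) \<and> wk E [last bl, h]"
        using wk_append[of E "butlast bl" "last bl" "[h]"] by simp
      then have wb: "wk E bl" "adj E (last bl) h" using blne by auto
      have cyc: "is_cycle E bl" unfolding is_cycle_def is_path_def is_walk_wk using True \<open>distinct bl\<close> wb hb by simp
      have cw: "cycle_weight w bl = ww w xs" unfolding cycle_weight_def walk_weight_ww xs hb ..
      show ?thesis using cyc cw less(2-4) xs by (intro exI[of _ bl]) auto
    next
      case False
      have "bl = [] \<or> (\<exists>a. bl = [a]) \<or> (\<exists>a b. bl = [a, b])"
      proof (cases bl)
        case (Cons a r) then show ?thesis using False by (cases r) (auto simp: Suc_le_eq)
      qed simp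
      then consider "bl = []" | a where "bl = [a]" | a b where "bl = [a, b]" by blast
      then show ?thesis
      proof cases
        case 1 then show ?thesis using less(2-4) xs by simp
      next
        case 2
        then have "xs = [a, a]" using xs less(3) by simp
        then show ?thesis using less(2) adj_V[OF G, of a a] by simp
      next
        case 3
        then have "xs = [a, b, a]" using xs less(3) by simp
        then show ?thesis using less(4) by (simp add: insert_commute)
      qed
    qed
  next
    case False
    then obtain a x b c where bl: "bl = a @ [x] @ b @ [x] @ c" using not_distinct_decomp by blast
    have xs2: "xs = a @ x # (b @ x # (c @ [h]))" using xs bl by simp
    define Z1 where "Z1 = x # b @ [x]"
    define Z2 where "Z2 = a @ x # c @ [h]"
    have "wk E (a @ x # (b @ x # (c @ [h])))" using less(2) xs2 by simp
    then have w1: "wk E (a @ [x])" "wk E (x # b @ x # c @ [h])"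
      using wk_append[of E a x "b @ x # c @ [h]"] by simp_all
    have "wk E ((x # b) @ x # (c @ [h]))" using w1 by simp
    then have w2: "wk E Z1" "wk E (x # c @ [h])" unfolding Z1_def
      using wk_append[of E "x # b" x "c @ [h]"] by simp_all
    have wz2: "wk E Z2" unfolding Z2_def using w1 w2 wk_append[of E a x "c @ [h]"] by simp
    have "ww w xs = ww w (a @ [x]) + ww w ((x # b) @ x # (c @ [h]))"
      using xs2 ww_append[of w a x "b @ x # c @ [h]"] by simp
    also have "\<dots> = ww w (a @ [x]) + ww w Z1 + ww w (x # c @ [h])"
      unfolding Z1_def using ww_append[of w "x # b" x "c @ [h]"] by simp
    finally have sum: "ww w xs = ww w Z1 + ww w Z2" unfolding Z2_def using ww_append[of w a x "c @ [h]"] by simp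
    have l1: "length Z1 < length xs" "length Z2 < length xs" unfolding Z1_def Z2_def xs2 by simp_all
    have c1: "hd Z1 = last Z1" unfolding Z1_def by simp
    have "hd Z2 = hd xs" unfolding Z2_def xs2 by (cases a) auto
    moreover have "last Z2 = h" unfolding Z2_def by simp
    ultimately have c2: "hd Z2 = last Z2" using less(3) unfolding h_def by simp
    have s1: "set Z1 \<subseteq> set xs" "set Z2 \<subseteq> set xs" unfolding Z1_def Z2_def xs2 by auto
    show ?thesis
    proof (cases "odd (ww w Z1)")
      case True
      from less(1)[OF l1(1) w2(1) c1 True] obtain C where C: "is_cycle E C" "set C \<subseteq> set Z1"
        "odd (cycle_weight w C)" "cycle_weight w C \<le> ww w Z1" by blast
      have "set C \<subseteq> set xs" "cycle_weight w C \<le> ww w xs" using C(2,4) s1 sum by auto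
      then show ?thesis using C by blast
    next
      case False
      then have "odd (ww w Z2)" using less(4) sum by simp
      from less(1)[OF l1(2) wz2 c2 this] obtain C where C: "is_cycle E C" "set C \<subseteq> set Z2"
        "odd (cycle_weight w C)" "cycle_weight w C \<le> ww w Z2" by blast
      have "set C \<subseteq> set xs" "cycle_weight w C \<le> ww w xs" using C(2,4) s1 sum by auto
      then show ?thesis using C by blast
    qed
  qed
qed

lemma set_dist_le:
  assumes "set_dist E {u} {v} \<le> enat j"
  shows "\<exists>xs. wk E xs \<and> hd xs = u \<and> last xs = v \<and> length xs \<le> j + 1"
proof -
  let ?S = "{xs. path_between E {u} {v} xs}"
  have "?S \<noteq> {}"
  proof
    assume "?S = {}"
    then have "set_dist E {u} {v} = \<infinity>" unfolding set_dist_def by (simp add: Inf_enat_def)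
    with assms show False by simp
  qed
  then have "Inf ((\<lambda>xs. enat (walk_len xs)) ` ?S) \<in> (\<lambda>xs. enat (walk_len xs)) ` ?S"
    unfolding Inf_enat_def by (auto intro: LeastI)
  then obtain xs where "xs \<in> ?S" "set_dist E {u} {v} = enat (walk_len xs)" unfolding set_dist_def by auto
  then show ?thesis using assms unfolding path_between_def is_path_def is_walk_wk walk_len_def by auto
qed

lemma set_dist_ge:
  assumes "wk E xs" "hd xs = u" "last xs = v" "length xs \<le> j + 1"
  shows "set_dist E {u} {v} \<le> enat j"
proof -
  obtain ys where ys: "wk E ys" "distinct ys" "hd ys = u" "last ys = v" "length ys \<le> length xs"
    using wk_path[OF assms(1), of "\<lambda>_. 0::nat"] assms by blast
  then have "path_between E {u} {v} ys" unfolding path_between_def is_path_def is_walk_wk by simp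
  then have "set_dist E {u} {v} \<le> enat (walk_len ys)" unfolding set_dist_def by (auto intro: INF_lower)
  also have "\<dots> \<le> enat j" using ys assms unfolding walk_len_def by simp
  finally show ?thesis .
qed

lemma nbhd_iff: "x \<in> closed_nbhd V E j S \<longleftrightarrow> x \<in> V \<and> (\<exists>u\<in>S. \<exists>xs. wk E xs \<and> hd xs = u \<and> last xs = x \<and> length xs \<le> j + 1)"
proof
  assume "x \<in> closed_nbhd V E j S"
  then obtain u where u: "x \<in> V" "u \<in> S" "set_dist E {u} {x} \<le> enat j" unfolding closed_nbhd_def by blast
  obtain xs where "wk E xs \<and> hd xs = u \<and> last xs = x \<and> length xs \<le> j + 1" using set_dist_le[OF u(3)] by blast
  then show "x \<in> V \<and> (\<exists>u\<in>S. \<exists>xs. wk E xs \<and> hd xs = u \<and> last xs = x \<and> length xs \<le> j + 1)" using u by blast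
next
  assume "x \<in> V \<and> (\<exists>u\<in>S. \<exists>xs. wk E xs \<and> hd xs = u \<and> last xs = x \<and> length xs \<le> j + 1)"
  then obtain u xs where u: "x \<in> V" "u \<in> S" "wk E xs" "hd xs = u" "last xs = x" "length xs \<le> j + 1" by blast
  have "set_dist E {u} {x} \<le> enat j" using set_dist_ge[OF u(3-6)] .
  then show "x \<in> closed_nbhd V E j S" unfolding closed_nbhd_def using u(1,2) by blast
qed

lemma set_dist_walk:
  assumes "set_dist E B1 B2 \<ge> enat m" "wk E xs" "hd xs \<in> B1" "last xs \<in> B2"
  shows "length xs \<ge> m + 1"
proof -
  obtain ys where ys: "wk E ys" "distinct ys" "hd ys = hd xs" "last ys = last xs" "length ys \<le> length xs"
    using wk_path[OF assms(2), of "\<lambda>_. 0::nat"] by blast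
  then have "path_between E B1 B2 ys" unfolding path_between_def is_path_def is_walk_wk using assms by simp
  then have "set_dist E B1 B2 \<le> enat (walk_len ys)" unfolding set_dist_def by (auto intro: INF_lower)
  then have "enat m \<le> enat (walk_len ys)" using assms(1) by (rule order_trans[rotated])
  then have "m \<le> length ys - 1" unfolding walk_len_def by simp
  then show ?thesis using ys assms by (cases ys) auto
qed



definition pref :: "('a set \<Rightarrow> nat) \<Rightarrow> 'a list \<Rightarrow> nat \<Rightarrow> nat" where
  "pref w P t = ww w (take (Suc t) P)"

lemma take_facts:
  assumes "t < length P"
  shows "hd (take (Suc t) P) = hd P" "last (take (Suc t) P) = P ! t" "length (take (Suc t) P) = Suc t"
    "hd (drop t P) = P ! t" "last (drop t P) = last P" "length (drop t P) = length P - t"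
proof -
  show "hd (take (Suc t) P) = hd P" using assms by (cases P) auto
  show "last (take (Suc t) P) = P ! t" using take_drop_split(2)[OF assms] by simp
  show "length (take (Suc t) P) = Suc t" using assms by simp
  show "hd (drop t P) = P ! t" using take_drop_split(3)[OF assms] by simp
  show "last (drop t P) = last P" using assms by (simp add: last_drop)
  show "length (drop t P) = length P - t" by simp
qed

locale side =
  fixes V :: "'a set" and E :: "'a set set" and w :: "'a set \<Rightarrow> nat" and i :: nat
    and B1 B2 :: "'a set" and P :: "'a list"
  assumes G: "graph V E" and W: "\<forall>e\<in>E. w e \<in> {3,4,5::nat}" and i1: "1 \<le> i"
    and B1V: "B1 \<subseteq> V" and wP: "wk E P" and hP: "hd P \<in> B1" and lP: "last P \<in> B2"
    and Pmin: "\<forall>Q. wk E Q \<and> hd Q \<in> B1 \<and> last Q \<in> B2 \<longrightarrow> ww w P \<le> ww w Q"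
begin

lemma Pne: "P \<noteq> []" using wP by auto

lemma prefix_min:
  assumes "t < length P" "wk E X" "hd X \<in> B1" "last X = P ! t"
  shows "pref w P t \<le> ww w X"
proof -
  have wd: "wk E (drop t P)" using wk_take_drop[OF assms(1) wP] by simp
  have tf: "hd (drop t P) = P ! t" "last (drop t P) = last P" using take_facts[OF assms(1)] by auto
  note g = glue[OF assms(2) wd, unfolded tf, OF assms(4)]
  have "ww w P \<le> ww w (X @ tl (drop t P))" using Pmin[rule_format, of "X @ tl (drop t P)"] g(1,3,4) assms(3) lP by simp
  then show ?thesis using g(2) ww_take_drop[OF assms(1), of w] unfolding pref_def by simp
qed

lemma seg_le:
  assumes "s \<le> t" "t < length P"
  shows "\<exists>Sg. wk E Sg \<and> hd Sg = P ! s \<and> last Sg = P ! t \<and> pref w P t = pref w P s + ww w Sg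
    \<and> length Sg = Suc t - s \<and> set Sg \<subseteq> set P
    \<and> (\<forall>X. wk E X \<and> hd X = P ! s \<and> last X = P ! t \<longrightarrow> ww w Sg \<le> ww w X)"
proof -
  define T where "T = take (Suc t) P"
  define Sg where "Sg = drop s T"
  have sT: "s < length T" unfolding T_def using assms by simp
  have wT: "wk E T" unfolding T_def using wk_take_drop[OF assms(2) wP] by simp
  have wS: "wk E Sg" unfolding Sg_def using wk_take_drop[OF sT wT] by simp
  have tT: "take (Suc s) T = take (Suc s) P" unfolding T_def using assms by (simp add: min_def)
  have F: "pref w P t = pref w P s + ww w Sg"
    unfolding pref_def Sg_def T_def[symmetric] using ww_take_drop[OF sT, of w] tT by simp
  have hS: "hd Sg = P ! s" unfolding Sg_def using take_facts(4)[OF sT] sT unfolding T_def by simp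
  have lS: "last Sg = P ! t" unfolding Sg_def using take_facts(5)[OF sT] take_facts(2)[OF assms(2)] unfolding T_def by simp
  have len: "length Sg = Suc t - s" unfolding Sg_def T_def using assms by simp
  have setS: "set Sg \<subseteq> set P" unfolding Sg_def T_def by (meson set_drop_subset set_take_subset subset_trans)
  have mn: "ww w Sg \<le> ww w X" if X: "wk E X" "hd X = P ! s" "last X = P ! t" for X
  proof -
    have s1: "s < length P" using assms by simp
    have w1: "wk E (take (Suc s) P)" using wk_take_drop[OF s1 wP] by simp
    have l1: "last (take (Suc s) P) = hd X" using take_facts(2)[OF s1] X by simp
    note g1 = glue[OF w1 X(1) l1]
    have wd: "wk E (drop t P)" using wk_take_drop[OF assms(2) wP] by simp
    have l2: "last (take (Suc s) P @ tl X) = hd (drop t P)" using g1(4) X(3) take_facts(4)[OF assms(2)] by simp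
    note g2 = glue[OF g1(1) wd l2]
    have "hd (take (Suc s) P @ tl X @ tl (drop t P)) \<in> B1" using g2(3) g1(3) take_facts(1)[OF s1] hP by simp
    moreover have "last (take (Suc s) P @ tl X @ tl (drop t P)) \<in> B2" using g2(4) take_facts(5)[OF assms(2)] lP by simp
    ultimately have "ww w P \<le> ww w (take (Suc s) P @ tl X @ tl (drop t P))" using Pmin g2(1) by simp
    then have "ww w P \<le> pref w P s + ww w X + ww w (drop t P)" using g2(2) g1(2) unfolding pref_def by simp
    then show ?thesis using ww_take_drop[OF assms(2), of w] F unfolding pref_def by simp
  qed
  show ?thesis using wS hS lS F len setS mn by blast
qed

lemma memA:
  assumes "wk E X" "hd X \<in> B1" "length X \<le> 3 * i + 2" "v \<in> set X"
  shows "v \<in> closed_nbhd V E (3 * i + 1) B1"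
proof -
  obtain Y where Y: "wk E Y" "hd Y = hd X" "last Y = v" "length Y \<le> length X"
    using wk_prefix[OF assms(1,4)] by blast
  have "set X \<subseteq> V" using walk_V[OF G assms(1)] assms(2) B1V by blast
  then have "v \<in> V" using assms(4) by blast
  then show ?thesis unfolding nbhd_iff using Y assms by (intro conjI bexI[of _ "hd X"]) auto
qed

lemma side1:
  assumes W0: "wk E W0" "hd W0 \<in> B1" "length W0 \<le> i + 1" "adj E (last W0) y"
    and R: "wk E R" "hd R = y" "length R \<le> i + 1" and t: "t < length P" "last R = P ! t"
  shows "\<exists>Z. wk E Z \<and> set Z \<subseteq> closed_nbhd V E (3 * i + 1) B1 \<and> hd Z = hd P \<and> last Z = last W0
     \<and> ww w Z = pref w P t + ww w R + w {y, last W0}"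
proof -
  let ?A = "closed_nbhd V E (3 * i + 1) B1"
  define x where "x = last W0"
  define Q where "Q = W0 @ R"
  note q = app[OF W0(1) R(1), unfolded R(2), OF W0(4)]
  have wQ: "wk E Q" and hQ: "hd Q \<in> B1" and lQ: "last Q = P ! t" and lenQ: "length Q \<le> 2 * i + 2"
    using q W0 R t unfolding Q_def by auto
  have "ww w Q \<le> 5 * (length Q - 1)" using ww_bounds[OF W wQ] by simp
  also have "\<dots> \<le> 10 * i + 5" using lenQ by simp
  finally have "pref w P t \<le> 10 * i + 5" using prefix_min[OF t(1) wQ hQ lQ] by simp
  moreover have "3 * t \<le> pref w P t" unfolding pref_def
    using ww_bounds[OF W, of "take (Suc t) P"] wk_take_drop[OF t(1) wP] take_facts(3)[OF t(1)] by simp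
  ultimately have tb: "t \<le> 4 * i + 1" by simp
  have QA: "set Q \<subseteq> ?A" using memA[OF wQ hQ] lenQ by auto
  have TA: "set (take (Suc t) P) \<subseteq> ?A"
  proof
    fix v assume "v \<in> set (take (Suc t) P)"
    then obtain s where s: "s < length (take (Suc t) P)" "v = take (Suc t) P ! s" by (metis in_set_conv_nth)
    then have st: "s \<le> t" "v = P ! s" using t by auto
    show "v \<in> ?A"
    proof (cases "s \<le> 3 * i + 1")
      case True
      have sl: "s < length P" using st t by simp
      have "v \<in> set (take (Suc s) P)" using take_facts(2)[OF sl] st(2) take_facts(3)[OF sl]
        by (metis last_in_set list.size(3) nat.distinct(1))
      then show ?thesis using memA[of "take (Suc s) P"] wk_take_drop[OF sl wP] take_facts(1,3)[OF sl] True hP by simp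
    next
      case False
      obtain Sg where Sg: "wk E Sg" "hd Sg = P ! s" "last Sg = P ! t" "length Sg = Suc t - s"
        using seg_le[OF st(1) t(1)] by blast
      have wr: "wk E (rev Sg)" using wk_rev[OF Sg(1)] .
      have lr: "last Q = hd (rev Sg)" using lQ Sg(3) by (simp add: hd_rev)
      note g = glue[OF wQ wr lr]
      have "length (Q @ tl (rev Sg)) \<le> 3 * i + 2" using g(6) lenQ Sg(4) tb False by simp
      moreover have "v \<in> set (Q @ tl (rev Sg))"
      proof -
        have "last (Q @ tl (rev Sg)) = v" using g(4) Sg(2) st(2) by (simp add: last_rev)
        moreover have "Q @ tl (rev Sg) \<noteq> []" using wQ by (cases Q) auto
        ultimately show ?thesis using last_in_set by metis
      qed
      ultimately show ?thesis using memA[OF g(1)] g(3) hQ by simp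
    qed
  qed
  have wT: "wk E (take (Suc t) P)" using wk_take_drop[OF t(1) wP] by simp
  have wRr: "wk E (rev R)" using wk_rev[OF R(1)] .
  have l1: "last (take (Suc t) P) = hd (rev R)" using take_facts(2)[OF t(1)] t(2) R(1)
    by (cases R rule: rev_cases) auto
  note g1 = glue[OF wT wRr l1]
  have lg1: "last (take (Suc t) P @ tl (rev R)) = y" using g1(4) R(2) R(1) by (cases R) auto
  have axy: "adj E (last (take (Suc t) P @ tl (rev R))) (hd [x])" using lg1 W0(4) adj_sym unfolding x_def by auto
  note g2 = app[OF g1(1) wk.simps(2)[of E x, THEN iffD2, OF TrueI] axy]
  define Z where "Z = (take (Suc t) P @ tl (rev R)) @ [x]"
  have "set Z \<subseteq> ?A"
  proof -
    have "set R \<subseteq> set Q" "x \<in> set Q" unfolding Q_def x_def using W0(1) by (auto intro: last_in_set)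
    then show ?thesis unfolding Z_def using TA QA g1(5) by auto
  qed
  moreover have "ww w Z = pref w P t + ww w R + w {y, x}"
    unfolding Z_def g2(2) g1(2) lg1 ww_rev[OF R(1)] pref_def by simp
  moreover have "hd Z = hd P" unfolding Z_def using g2(3) g1(3) take_facts(1)[OF t(1)] by simp
  moreover have "last Z = x" unfolding Z_def by simp
  ultimately show ?thesis using g2(1) unfolding Z_def x_def by blast
qed

end


definition conn :: "'a set set \<Rightarrow> 'a set \<Rightarrow> 'a \<Rightarrow> 'a \<Rightarrow> bool" where
  "conn E A u v \<longleftrightarrow> (\<exists>W. wk E W \<and> set W \<subseteq> A \<and> hd W = u \<and> last W = v)"

definition lroot :: "'a set set \<Rightarrow> 'a set \<Rightarrow> 'a \<Rightarrow> 'a \<Rightarrow> 'a" where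
  "lroot E A r x = (if conn E A r x then r else SOME r'. conn E A r' x)"

definition lab :: "'a set set \<Rightarrow> ('a set \<Rightarrow> nat) \<Rightarrow> 'a set \<Rightarrow> 'a \<Rightarrow> 'a \<Rightarrow> nat" where
  "lab E w A r x = ww w (SOME W. wk E W \<and> set W \<subseteq> A \<and> hd W = lroot E A r x \<and> last W = x)"

lemma closed_even_in:
  assumes "graph V E" "weighted_bipartite E w A" "wk E Z" "hd Z = last Z" "set Z \<subseteq> A"
  shows "even (ww w Z)"
proof (rule ccontr)
  assume "\<not> even (ww w Z)"
  then obtain C where "is_cycle E C" "set C \<subseteq> set Z" "odd (cycle_weight w C)"
    using closed_odd_cycle[OF assms(1,3,4)] by blast
  then show False using assms(2,5) unfolding weighted_bipartite_def by blast
qed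

lemma conn_refl: "x \<in> A \<Longrightarrow> conn E A x x"
  unfolding conn_def by (rule exI[of _ "[x]"]) simp

lemma conn_step:
  assumes "conn E A u x" "adj E x y" "y \<in> A"
  shows "conn E A u y"
proof -
  obtain W where W: "wk E W" "set W \<subseteq> A" "hd W = u" "last W = x" using assms(1) unfolding conn_def by blast
  have ad: "adj E (last W) (hd [y])" using W(4) assms(2) by simp
  have wy: "wk E [y]" by simp
  note a = app[OF W(1) wy ad]
  show ?thesis unfolding conn_def using a W assms(3) by (intro exI[of _ "W @ [y]"]) auto
qed

lemma root_conn:
  assumes "x \<in> A"
  shows "conn E A (lroot E A r x) x"
proof (cases "conn E A r x")
  case True then show ?thesis unfolding lroot_def by simp
next
  case False
  have "conn E A x x" using conn_refl[OF assms] .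
  then have "conn E A (SOME r'. conn E A r' x) x" by (rule someI)
  then show ?thesis using False unfolding lroot_def by simp
qed

lemma lab_walk:
  assumes "x \<in> A"
  shows "\<exists>W. wk E W \<and> set W \<subseteq> A \<and> hd W = lroot E A r x \<and> last W = x \<and> ww w W = lab E w A r x"
proof -
  have "\<exists>W. wk E W \<and> set W \<subseteq> A \<and> hd W = lroot E A r x \<and> last W = x"
    using root_conn[OF assms] unfolding conn_def .
  then have "let W = (SOME W. wk E W \<and> set W \<subseteq> A \<and> hd W = lroot E A r x \<and> last W = x) in
      wk E W \<and> set W \<subseteq> A \<and> hd W = lroot E A r x \<and> last W = x"
    unfolding Let_def by (rule someI_ex)
  then show ?thesis unfolding lab_def Let_def by blast
qed

lemma lab_edge:
  assumes G: "graph V E" and B: "weighted_bipartite E w A" and xy: "x \<in> A" "y \<in> A" "adj E x y"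
  shows "even (lab E w A r x + w {x, y} + lab E w A r y)"
proof -
  have cxy: "conn E A u x \<longleftrightarrow> conn E A u y" for u
    using conn_step[of E A u x y] conn_step[of E A u y x] xy adj_sym by metis
  have rr: "lroot E A r y = lroot E A r x"
    unfolding lroot_def using cxy by simp
  obtain Wx where Wx: "wk E Wx" "set Wx \<subseteq> A" "hd Wx = lroot E A r x" "last Wx = x" "ww w Wx = lab E w A r x"
    using lab_walk[OF xy(1)] by blast
  obtain Wy where Wy: "wk E Wy" "set Wy \<subseteq> A" "hd Wy = lroot E A r x" "last Wy = y" "ww w Wy = lab E w A r y"
    using lab_walk[OF xy(2), of E r w] rr by auto
  have wr: "wk E (rev Wy)" using wk_rev[OF Wy(1)] .
  have ad: "adj E (last Wx) (hd (rev Wy))" using Wx(4) Wy(4) xy(3) by (simp add: hd_rev)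
  note a = app[OF Wx(1) wr ad]
  have "hd (Wx @ rev Wy) = last (Wx @ rev Wy)" using a(3,4) Wx(3) Wy(3) by (simp add: last_rev)
  moreover have "set (Wx @ rev Wy) \<subseteq> A" using Wx(2) Wy(2) by auto
  ultimately have "even (ww w (Wx @ rev Wy))" using closed_even_in[OF G B a(1)] by blast
  moreover have "ww w (Wx @ rev Wy) = lab E w A r x + w {x, y} + lab E w A r y"
    using a(2) Wx(4,5) Wy(4,5) ww_rev[OF Wy(1)] by (simp add: hd_rev)
  ultimately show ?thesis by simp
qed

lemma lab_root_walk:
  assumes "conn E A r x" "x \<in> A"
  shows "\<exists>W. wk E W \<and> set W \<subseteq> A \<and> hd W = r \<and> last W = x \<and> ww w W = lab E w A r x"
  using lab_walk[OF assms(2), of E r w] assms(1) unfolding lroot_def by simp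

lemma telescope:
  assumes "\<forall>x y. x \<in> S \<longrightarrow> y \<in> S \<longrightarrow> adj E x y \<longrightarrow> even (w {x, y} + f x + f y)"
  shows "wk E Z \<Longrightarrow> set Z \<subseteq> S \<Longrightarrow> even (ww w Z + f (hd Z) + f (last Z))"
proof (induction Z)
  case Nil then show ?case by simp
next
  case (Cons x zs)
  show ?case
  proof (cases zs)
    case Nil then show ?thesis by simp
  next
    case (Cons y ys)
    have h: "wk E zs" "adj E x y" "set zs \<subseteq> S" "x \<in> S" "y \<in> S" using Cons.prems \<open>zs = y # ys\<close> by auto
    have e1: "even (ww w zs + f y + f (last zs))" using Cons.IH h(1,3) \<open>zs = y # ys\<close> by simp
    have e2: "even (w {x, y} + f x + f y)" using assms h(2,4,5) by blast
    have "ww w (x # zs) = w {x, y} + ww w zs" "last (x # zs) = last zs" using \<open>zs = y # ys\<close> by simp_all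
    then show ?thesis using e1 e2 by (simp, argo)
  qed
qed



definition nearP :: "'a set set \<Rightarrow> nat \<Rightarrow> 'a list \<Rightarrow> 'a \<Rightarrow> bool" where
  "nearP E i P x \<longleftrightarrow> (\<exists>R. wk E R \<and> hd R = x \<and> last R \<in> set P \<and> length R \<le> i + 1)"
definition nearB :: "'a set set \<Rightarrow> nat \<Rightarrow> 'a set \<Rightarrow> 'a \<Rightarrow> bool" where
  "nearB E i B x \<longleftrightarrow> (\<exists>W. wk E W \<and> hd W \<in> B \<and> last W = x \<and> length W \<le> i + 1)"
definition rung :: "'a set set \<Rightarrow> nat \<Rightarrow> 'a list \<Rightarrow> 'a \<Rightarrow> 'a list" where
  "rung E i P x = (SOME R. wk E R \<and> hd R = x \<and> last R \<in> set P \<and> length R \<le> i + 1)"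
definition idx :: "'a list \<Rightarrow> 'a \<Rightarrow> nat" where
  "idx P v = (SOME t. t < length P \<and> P ! t = v)"
definition lam :: "'a set \<Rightarrow> 'a set set \<Rightarrow> ('a set \<Rightarrow> nat) \<Rightarrow> nat \<Rightarrow> 'a set \<Rightarrow> 'a set \<Rightarrow> 'a list \<Rightarrow> 'a \<Rightarrow> nat" where
  "lam V E w i B1 B2 P x = (if nearP E i P x then ww w (rung E i P x) + pref w P (idx P (last (rung E i P x)))
     else if nearB E i B1 x then lab E w (closed_nbhd V E (3 * i + 1) B1) (hd P) x
     else ww w P + lab E w (closed_nbhd V E (3 * i + 1) B2) (last P) x)"

lemma rung_spec: "nearP E i P x \<Longrightarrow> wk E (rung E i P x) \<and> hd (rung E i P x) = x \<and> last (rung E i P x) \<in> set P \<and> length (rung E i P x) \<le> i + 1"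
  unfolding nearP_def rung_def by (rule someI_ex)

lemma idx_spec: "v \<in> set P \<Longrightarrow> idx P v < length P \<and> P ! idx P v = v"
  unfolding idx_def by (rule someI_ex) (metis in_set_conv_nth)

locale ctx =
  fixes V :: "'a set" and E :: "'a set set" and w :: "'a set \<Rightarrow> nat"
    and i k :: nat and B1 B2 :: "'a set" and P :: "'a list"
  assumes G: "graph V E"
    and W: "\<forall>e\<in>E. w e \<in> {3, 4, 5}"
    and i1: "i \<ge> 1" and kb: "k \<ge> 10 * i + 35"
    and oddc: "\<forall>C. is_cycle E C \<and> odd (cycle_weight w C) \<longrightarrow> cycle_weight w C \<ge> 2 * k + 1"
    and B1V: "B1 \<subseteq> V" and B2V: "B2 \<subseteq> V"
    and dist: "set_dist E B1 B2 \<ge> enat (2 * i + 2)"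
    and Pb: "path_between E B1 B2 P"
    and Pmin: "\<forall>Q. path_between E B1 B2 Q \<longrightarrow> walk_weight w P \<le> walk_weight w Q"
    and bip1: "weighted_bipartite E w (closed_nbhd V E (3 * i + 1) B1)"
    and bip2: "weighted_bipartite E w (closed_nbhd V E (3 * i + 1) B2)"
begin

lemma wP: "wk E P" and hP: "hd P \<in> B1" and lP: "last P \<in> B2"
  using Pb unfolding path_between_def is_path_def is_walk_wk by auto

lemma Pmin_ww: "wk E Q \<Longrightarrow> hd Q \<in> B1 \<Longrightarrow> last Q \<in> B2 \<Longrightarrow> ww w P \<le> ww w Q"
proof -
  assume a: "wk E Q" "hd Q \<in> B1" "last Q \<in> B2"
  obtain ys where ys: "wk E ys" "distinct ys" "hd ys = hd Q" "last ys = last Q" "ww w ys \<le> ww w Q"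
    using wk_path[OF a(1), of w] by blast
  have "path_between E B1 B2 ys" unfolding path_between_def is_path_def is_walk_wk using ys a by simp
  then have "walk_weight w P \<le> walk_weight w ys" using Pmin by blast
  then show ?thesis using ys(5) unfolding walk_weight_ww by simp
qed

sublocale s1: side V E w i B1 B2 P
  using G W i1 B1V wP hP lP Pmin_ww by unfold_locales auto

lemma wPr: "wk E (rev P)" using wk_rev[OF wP] .

sublocale s2: side V E w i B2 B1 "rev P"
proof unfold_locales
  show "wk E (rev P)" using wPr .
  show "hd (rev P) \<in> B2" using lP by (simp add: hd_rev)
  show "last (rev P) \<in> B1" using hP by (simp add: last_rev)
  show "\<forall>Q. wk E Q \<and> hd Q \<in> B2 \<and> last Q \<in> B1 \<longrightarrow> ww w (rev P) \<le> ww w Q"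
  proof (intro allI impI)
    fix Q assume q: "wk E Q \<and> hd Q \<in> B2 \<and> last Q \<in> B1"
    have "ww w P \<le> ww w (rev Q)" using Pmin_ww[of "rev Q"] wk_rev[of E Q] q by (simp add: hd_rev last_rev)
    then show "ww w (rev P) \<le> ww w Q" using ww_rev[OF wP] ww_rev[of E Q w] q by simp
  qed
qed (use G W i1 B2V in auto)

abbreviation "A1 \<equiv> closed_nbhd V E (3 * i + 1) B1"
abbreviation "A2 \<equiv> closed_nbhd V E (3 * i + 1) B2"
abbreviation "S \<equiv> closed_nbhd V E i (B1 \<union> B2 \<union> set P)"
abbreviation "lm \<equiv> lam V E w i B1 B2 P"

lemma closed_even_small:
  assumes "wk E Z" "hd Z = last Z" "ww w Z \<le> 2 * k"
  shows "even (ww w Z)"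
proof (rule ccontr)
  assume "\<not> even (ww w Z)"
  then obtain C where "is_cycle E C" "odd (cycle_weight w C)" "cycle_weight w C \<le> ww w Z"
    using closed_odd_cycle[OF G assms(1,2)] by blast
  then show False using oddc assms(3) by force
qed

lemma S_cases: "x \<in> S \<Longrightarrow> nearP E i P x \<or> nearB E i B1 x \<or> nearB E i B2 x"
proof -
  assume "x \<in> S"
  then obtain u X where X: "u \<in> B1 \<union> B2 \<union> set P" "wk E X" "hd X = u" "last X = x" "length X \<le> i + 1"
    unfolding nbhd_iff by blast
  show ?thesis
  proof (cases "u \<in> set P")
    case True
    then have "nearP E i P x" unfolding nearP_def using wk_rev[OF X(2)] X
      by (intro exI[of _ "rev X"]) (simp add: hd_rev last_rev)
    then show ?thesis by simp
  next
    case False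
    then show ?thesis using X unfolding nearB_def by blast
  qed
qed

lemma nearB1_A: "nearB E i B1 x \<Longrightarrow> x \<in> A1"
proof -
  assume "nearB E i B1 x"
  then obtain W where W: "wk E W" "hd W \<in> B1" "last W = x" "length W \<le> i + 1" unfolding nearB_def by blast
  have "length W \<le> 3 * i + 2" using W(4) by simp
  moreover have "x \<in> set W" using W(1,3) by (cases W rule: rev_cases) auto
  ultimately show ?thesis using s1.memA[OF W(1,2)] by blast
qed

lemma nearB2_A: "nearB E i B2 x \<Longrightarrow> x \<in> A2"
proof -
  assume "nearB E i B2 x"
  then obtain W where W: "wk E W" "hd W \<in> B2" "last W = x" "length W \<le> i + 1" unfolding nearB_def by blast
  have "length W \<le> 3 * i + 2" using W(4) by simp
  moreover have "x \<in> set W" using W(1,3) by (cases W rule: rev_cases) auto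
  ultimately show ?thesis using s2.memA[OF W(1,2)] by blast
qed

lemma no_mix:
  assumes "nearB E i B1 x" "nearB E i B2 y" "adj E x y"
  shows False
proof -
  obtain W1 where W1: "wk E W1" "hd W1 \<in> B1" "last W1 = x" "length W1 \<le> i + 1" using assms(1) unfolding nearB_def by blast
  obtain W2 where W2: "wk E W2" "hd W2 \<in> B2" "last W2 = y" "length W2 \<le> i + 1" using assms(2) unfolding nearB_def by blast
  have ad: "adj E (last W1) (hd (rev W2))" using W1(3) W2(3) assms(3) by (simp add: hd_rev)
  note a = app[OF W1(1) wk_rev[OF W2(1)] ad]
  have "length (W1 @ rev W2) \<ge> 2 * i + 2 + 1"
    using set_dist_walk[OF dist a(1)] a(3,4) W1(2) W2(2) by (simp add: last_rev)
  then show False using W1(4) W2(4) by simp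
qed

lemma seg_any:
  assumes "s < length P" "t < length P"
  shows "\<exists>Sg. wk E Sg \<and> hd Sg = P ! s \<and> last Sg = P ! t \<and> even (ww w Sg + pref w P s + pref w P t)
    \<and> (\<forall>X. wk E X \<and> hd X = P ! s \<and> last X = P ! t \<longrightarrow> ww w Sg \<le> ww w X)"
proof (cases "s \<le> t")
  case True
  then obtain Sg where Sg: "wk E Sg" "hd Sg = P ! s" "last Sg = P ! t" "pref w P t = pref w P s + ww w Sg"
    "\<forall>X. wk E X \<and> hd X = P ! s \<and> last X = P ! t \<longrightarrow> ww w Sg \<le> ww w X"
    using s1.seg_le[OF True assms(2)] by blast
  have "ww w Sg + pref w P s + pref w P t = 2 * (pref w P s + ww w Sg)" using Sg(4) by simp
  then have ev: "even (ww w Sg + pref w P s + pref w P t)" by (metis dvd_triv_left)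
  show ?thesis using Sg(1-3,5) ev by blast
next
  case False
  then obtain Sg where Sg: "wk E Sg" "hd Sg = P ! t" "last Sg = P ! s" "pref w P s = pref w P t + ww w Sg"
    "\<forall>X. wk E X \<and> hd X = P ! t \<and> last X = P ! s \<longrightarrow> ww w Sg \<le> ww w X"
    using s1.seg_le[of t s] assms by auto
  have mn: "ww w (rev Sg) \<le> ww w X" if X: "wk E X" "hd X = P ! s" "last X = P ! t" for X
  proof -
    have "hd (rev X) = P ! t" "last (rev X) = P ! s" using X by (simp_all add: hd_rev last_rev)
    then have "ww w Sg \<le> ww w (rev X)" using Sg(5) wk_rev[OF X(1)] by blast
    then show ?thesis using ww_rev[OF X(1), of w] ww_rev[OF Sg(1), of w] by simp
  qed
  have "ww w Sg + pref w P s + pref w P t = 2 * (pref w P t + ww w Sg)" using Sg(4) by simp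
  then have ev: "even (ww w (rev Sg) + pref w P s + pref w P t)" using ww_rev[OF Sg(1), of w] by (metis dvd_triv_left)
  have "wk E (rev Sg) \<and> hd (rev Sg) = P ! s \<and> last (rev Sg) = P ! t" using wk_rev[OF Sg(1)] Sg(2,3) by (simp add: hd_rev last_rev)
  then show ?thesis using mn ev by blast
qed


lemma cons_PP:
  assumes x: "nearP E i P x" and y: "nearP E i P y" and xy: "adj E x y"
  shows "even (w {x, y} + lm x + lm y)"
proof -
  define Rx where "Rx = rung E i P x"
  define Ry where "Ry = rung E i P y"
  define tx where "tx = idx P (last Rx)"
  define ty where "ty = idx P (last Ry)"
  have Rx: "wk E Rx" "hd Rx = x" "last Rx \<in> set P" "length Rx \<le> i + 1" using rung_spec[OF x] unfolding Rx_def by auto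
  have Ry: "wk E Ry" "hd Ry = y" "last Ry \<in> set P" "length Ry \<le> i + 1" using rung_spec[OF y] unfolding Ry_def by auto
  have tx: "tx < length P" "P ! tx = last Rx" using idx_spec[OF Rx(3)] unfolding tx_def by auto
  have ty: "ty < length P" "P ! ty = last Ry" using idx_spec[OF Ry(3)] unfolding ty_def by auto
  have lx: "lm x = ww w Rx + pref w P tx" unfolding lam_def Rx_def tx_def using x by simp
  have ly: "lm y = ww w Ry + pref w P ty" unfolding lam_def Ry_def ty_def using y by simp
  obtain Sg where Sg: "wk E Sg" "hd Sg = P ! tx" "last Sg = P ! ty" "even (ww w Sg + pref w P tx + pref w P ty)"
    "\<forall>X. wk E X \<and> hd X = P ! tx \<and> last X = P ! ty \<longrightarrow> ww w Sg \<le> ww w X"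
    using seg_any[OF tx(1) ty(1)] by blast
  have ad1: "adj E (last (rev Rx)) (hd Ry)" using Rx(2) Ry(2) xy by (simp add: last_rev)
  note X = app[OF wk_rev[OF Rx(1)] Ry(1) ad1]
  have "ww w Sg \<le> ww w (rev Rx @ Ry)" using Sg(5) X(1,3,4) tx(2) ty(2) by (simp add: hd_rev)
  also have "\<dots> = ww w Rx + w {x, y} + ww w Ry" using X(2) ww_rev[OF Rx(1)] Rx(2) Ry(2) by (simp add: last_rev)
  finally have sgb: "ww w Sg \<le> ww w Rx + w {x, y} + ww w Ry" .
  have wxy: "w {x, y} \<le> 5" using W xy unfolding adj_def by auto
  have "5 * (length Rx - 1) \<le> 5 * i" "5 * (length Ry - 1) \<le> 5 * i" using Rx(4) Ry(4) by simp_all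
  then have bRx: "ww w Rx \<le> 5 * i" and bRy: "ww w Ry \<le> 5 * i"
    using ww_bounds[OF W Rx(1)] ww_bounds[OF W Ry(1)] by linarith+
  have l1: "last Rx = hd Sg" using tx(2) Sg(2) by simp
  note g1 = glue[OF Rx(1) Sg(1) l1]
  have l2: "last (Rx @ tl Sg) = hd (rev Ry)" using g1(4) Sg(3) ty(2) by (simp add: hd_rev)
  note g2 = glue[OF g1(1) wk_rev[OF Ry(1)] l2]
  define Z1 where "Z1 = (Rx @ tl Sg) @ tl (rev Ry)"
  have lz1: "last Z1 = y" unfolding Z1_def using g2(4) Ry(2) by (simp add: last_rev)
  have ad2: "adj E (last Z1) (hd [x])" using lz1 xy adj_sym by simp
  note g3 = app[OF g2(1)[folded Z1_def] wk.simps(2)[of E x, THEN iffD2, OF TrueI] ad2]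
  have wZ: "ww w (Z1 @ [x]) = ww w Rx + ww w Sg + ww w Ry + w {x, y}"
    using g3(2) g2(2) g1(2) ww_rev[OF Ry(1)] lz1 unfolding Z1_def by (simp add: insert_commute)
  have hZ: "hd (Z1 @ [x]) = last (Z1 @ [x])" using g3(3) g2(3) g1(3) Rx(2) unfolding Z1_def by simp
  have "ww w (Z1 @ [x]) \<le> 2 * k" using wZ sgb wxy bRx bRy kb by simp
  then have "even (ww w (Z1 @ [x]))" using closed_even_small[OF g3(1) hZ] by simp
  then show ?thesis using Sg(4) wZ lx ly by (simp, argo)
qed

lemma cons_PB1:
  assumes x: "\<not> nearP E i P x" "nearB E i B1 x" and y: "nearP E i P y" and xy: "adj E x y"
  shows "even (w {x, y} + lm x + lm y)"
proof -
  obtain W0 where W0: "wk E W0" "hd W0 \<in> B1" "last W0 = x" "length W0 \<le> i + 1" using x(2) unfolding nearB_def by blast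
  define R where "R = rung E i P y"
  define t where "t = idx P (last R)"
  have R: "wk E R" "hd R = y" "last R \<in> set P" "length R \<le> i + 1" using rung_spec[OF y] unfolding R_def by auto
  have t: "t < length P" "P ! t = last R" using idx_spec[OF R(3)] unfolding t_def by auto
  have ly: "lm y = ww w R + pref w P t" unfolding lam_def R_def t_def using y by simp
  have lx: "lm x = lab E w A1 (hd P) x" unfolding lam_def using x by simp
  obtain Z where Z: "wk E Z" "set Z \<subseteq> A1" "hd Z = hd P" "last Z = x" "ww w Z = pref w P t + ww w R + w {y, x}"
    using s1.side1[OF W0(1,2,4), unfolded W0(3), OF xy R(1,2,4) t(1) t(2)[symmetric]] W0(3) by blast
  have xA: "x \<in> A1" using Z(1,2,4) by (metis last_in_set subsetD wk.simps(1))
  have "conn E A1 (hd P) x" unfolding conn_def using Z by blast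
  then obtain Wx where Wx: "wk E Wx" "set Wx \<subseteq> A1" "hd Wx = hd P" "last Wx = x" "ww w Wx = lab E w A1 (hd P) x"
    using lab_root_walk[OF _ xA] by blast
  have l: "last Z = hd (rev Wx)" using Z(4) Wx(4) by (simp add: hd_rev)
  note g = glue[OF Z(1) wk_rev[OF Wx(1)] l]
  have "hd (Z @ tl (rev Wx)) = last (Z @ tl (rev Wx))" using g(3,4) Z(3) Wx(3) by (simp add: last_rev)
  moreover have "set (Z @ tl (rev Wx)) \<subseteq> A1" using g(5) Z(2) Wx(2) by auto
  ultimately have "even (ww w (Z @ tl (rev Wx)))" using closed_even_in[OF G bip1 g(1)] by blast
  then have "even (ww w Z + ww w Wx)" using g(2) ww_rev[OF Wx(1)] by simp
  then show ?thesis using Z(5) Wx(5) lx ly by (simp add: insert_commute, argo)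
qed

lemma cons_PB2:
  assumes x: "\<not> nearP E i P x" "\<not> nearB E i B1 x" "nearB E i B2 x" and y: "nearP E i P y" and xy: "adj E x y"
  shows "even (w {x, y} + lm x + lm y)"
proof -
  obtain W0 where W0: "wk E W0" "hd W0 \<in> B2" "last W0 = x" "length W0 \<le> i + 1" using x(3) unfolding nearB_def by blast
  define R where "R = rung E i P y"
  define t where "t = idx P (last R)"
  have R: "wk E R" "hd R = y" "last R \<in> set P" "length R \<le> i + 1" using rung_spec[OF y] unfolding R_def by auto
  have t: "t < length P" "P ! t = last R" using idx_spec[OF R(3)] unfolding t_def by auto
  define t' where "t' = length P - 1 - t"
  have t': "t' < length (rev P)" "last R = rev P ! t'" using t unfolding t'_def by (auto simp: rev_nth)
  have ly: "lm y = ww w R + pref w P t" unfolding lam_def R_def t_def using y by simp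
  have lx: "lm x = ww w P + lab E w A2 (last P) x" unfolding lam_def using x by simp
  obtain Z where Z: "wk E Z" "set Z \<subseteq> A2" "hd Z = hd (rev P)" "last Z = x" "ww w Z = pref w (rev P) t' + ww w R + w {y, x}"
    using s2.side1[OF W0(1,2,4), unfolded W0(3), OF xy R(1,2,4) t'] W0(3) by blast
  have eq: "Suc t' = length P - t" using t unfolding t'_def by simp
  have "take (Suc t') (rev P) = rev (drop t P)" unfolding eq by (simp add: rev_drop)
  then have pr: "pref w (rev P) t' = ww w (drop t P)" unfolding pref_def
    using ww_rev[of E "drop t P" w] wk_take_drop[OF t(1) wP] by simp
  have wP2: "ww w P = pref w P t + ww w (drop t P)" using ww_take_drop[OF t(1)] unfolding pref_def by simp
  have xA: "x \<in> A2" using Z(1,2,4) by (metis last_in_set subsetD wk.simps(1))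
  have "conn E A2 (last P) x" unfolding conn_def using Z by (simp add: hd_rev) blast
  then obtain Wx where Wx: "wk E Wx" "set Wx \<subseteq> A2" "hd Wx = last P" "last Wx = x" "ww w Wx = lab E w A2 (last P) x"
    using lab_root_walk[OF _ xA] by blast
  have l: "last Z = hd (rev Wx)" using Z(4) Wx(4) by (simp add: hd_rev)
  note g = glue[OF Z(1) wk_rev[OF Wx(1)] l]
  have "hd (Z @ tl (rev Wx)) = last (Z @ tl (rev Wx))" using g(3,4) Z(3) Wx(3) by (simp add: last_rev hd_rev)
  moreover have "set (Z @ tl (rev Wx)) \<subseteq> A2" using g(5) Z(2) Wx(2) by auto
  ultimately have "even (ww w (Z @ tl (rev Wx)))" using closed_even_in[OF G bip2 g(1)] by blast
  then have "even (ww w Z + ww w Wx)" using g(2) ww_rev[OF Wx(1)] by simp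
  then show ?thesis using Z(5) Wx(5) lx ly pr wP2 by (simp add: insert_commute, argo)
qed

lemma cons_BB:
  assumes x: "\<not> nearP E i P x" "nearB E i B1 x \<or> nearB E i B2 x"
    and y: "\<not> nearP E i P y" "nearB E i B1 y \<or> nearB E i B2 y" and xy: "adj E x y"
  shows "even (w {x, y} + lm x + lm y)"
proof (cases "nearB E i B1 x")
  case True
  then have y1: "nearB E i B1 y" using y(2) no_mix[OF True _ xy] by blast
  have "even (lab E w A1 (hd P) x + w {x, y} + lab E w A1 (hd P) y)"
    using lab_edge[OF G bip1 nearB1_A[OF True] nearB1_A[OF y1] xy] .
  then show ?thesis unfolding lam_def using x(1) y(1) True y1 by (simp, argo)
next
  case False
  then have x2: "nearB E i B2 x" using x(2) by blast
  have y1: "\<not> nearB E i B1 y" using no_mix[OF _ x2 adj_sym[OF xy]] by blast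
  then have y2: "nearB E i B2 y" using y(2) by blast
  have "even (lab E w A2 (last P) x + w {x, y} + lab E w A2 (last P) y)"
    using lab_edge[OF G bip2 nearB2_A[OF x2] nearB2_A[OF y2] xy] .
  then show ?thesis unfolding lam_def using x(1) y(1) False y1 by (simp, argo)
qed

lemma cons_half:
  assumes "x \<in> S" "nearP E i P y" "adj E x y"
  shows "even (w {x, y} + lm x + lm y)"
proof (cases "nearP E i P x")
  case True then show ?thesis using cons_PP assms by blast
next
  case False
  show ?thesis
  proof (cases "nearB E i B1 x")
    case True then show ?thesis using cons_PB1 False assms by blast
  next
    case n1: False
    then have "nearB E i B2 x" using S_cases[OF assms(1)] False by blast
    then show ?thesis using cons_PB2 False n1 assms by blast
  qed
qed

lemma cons:
  assumes "x \<in> S" "y \<in> S" "adj E x y"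
  shows "even (w {x, y} + lm x + lm y)"
proof (cases "nearP E i P y")
  case True then show ?thesis using cons_half assms by blast
next
  case F: False
  show ?thesis
  proof (cases "nearP E i P x")
    case True
    have "even (w {y, x} + lm y + lm x)" using cons_half[OF assms(2) True adj_sym[OF assms(3)]] .
    then show ?thesis by (simp add: insert_commute add.commute add.left_commute)
  next
    case False
    then show ?thesis using cons_BB[OF False _ F _ assms(3)] S_cases[OF assms(1)] S_cases[OF assms(2)] F by blast
  qed
qed

lemma main: "weighted_bipartite E w S"
  unfolding weighted_bipartite_def
proof
  assume "\<exists>C. is_cycle E C \<and> set C \<subseteq> S \<and> odd (cycle_weight w C)"
  then obtain C where C: "is_cycle E C" "set C \<subseteq> S" "odd (cycle_weight w C)" by blast
  have wC: "wk E C" "adj E (last C) (hd [hd C])" using C(1) unfolding is_cycle_def is_path_def is_walk_wk by auto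
  note a = app[OF wC(1) wk.simps(2)[of E "hd C", THEN iffD2, OF TrueI] wC(2)]
  have Cne: "C \<noteq> []" using wC by auto
  have "set (C @ [hd C]) \<subseteq> S" using C(2) Cne by auto
  then have "even (ww w (C @ [hd C]) + lm (hd (C @ [hd C])) + lm (last (C @ [hd C])))"
    using telescope[of S E w lm, OF _ a(1)] cons by blast
  then have "even (ww w (C @ [hd C]))" using Cne by (simp, argo)
  then show False using C(3) unfolding cycle_weight_def walk_weight_ww by simp
qed

end

theorem corollary4p4:
  fixes V :: "'a set" and E :: "'a set set" and w :: "'a set \<Rightarrow> nat"
    and i k :: nat and B1 B2 :: "'a set" and P :: "'a list"
  assumes "graph V E"
    and "\<forall>e\<in>E. w e \<in> {3, 4, 5}"
    and "i \<ge> 1" and "k \<ge> 10 * i + 35"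
    and "\<forall>C. is_cycle E C \<and> odd (cycle_weight w C) \<longrightarrow> cycle_weight w C \<ge> 2 * k + 1"
    and "B1 \<subseteq> V" and "B2 \<subseteq> V"
    and "set_dist E B1 B2 \<ge> enat (2 * i + 2)"
    and "path_between E B1 B2 P"
    and "\<forall>Q. path_between E B1 B2 Q \<longrightarrow> walk_weight w P \<le> walk_weight w Q"
    and "weighted_bipartite E w (closed_nbhd V E (3 * i + 1) B1)"
    and "weighted_bipartite E w (closed_nbhd V E (3 * i + 1) B2)"
  shows "weighted_bipartite E w (closed_nbhd V E i (B1 \<union> B2 \<union> set P))"
proof -
  interpret ctx V E w i k B1 B2 P using assms by unfold_locales
  show ?thesis by (rule main)
qed

end
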